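(* Equip $\mathbb{R}^{1,1}$ with the Minkowski inner product $x\cdot y=-x_0y_0+x_1y_1$, let $O$ be the origin, and for $\theta_1,\theta_2\in\mathbb{R}$ let $P_i=(\sinh\theta_i,\cosh\theta_i)$, $i=1,2$, be points on the branch $x_1>0$ of the hyperbola $-x_0^2+x_1^2=1$. Then the vectors $OP_1$ and $OP_2$ are spacelike and the pseudo-angle $\Theta$ between them satisfies $\cosh^2(\Theta)=\cosh^2(\theta_1-\theta_2)$, i.e. $\Theta=|\theta_1-\theta_2|$. Consequently, for any $\theta_0\in\mathbb{R}$ with $\theta_0\neq\theta_1,\theta_2$ and $P_0=(\sinh\theta_0,\cosh\theta_0)$, $\Theta$ is twice the pseudo-angle between the chords $P_0P_1$ and $P_0P_2$, the latter being $\frac{|\theta_1-\theta_2|}{2}$.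
   Context: A vector $x\in\mathbb{R}^{1,1}$ is timelike if $x\cdot x<0$ and spacelike if $x\cdot x>0$. For two vectors $x,y$ that are both timelike or both spacelike, the pseudo-angle $\theta\ge 0$ between them is defined by $\cosh^2(\theta)=\frac{(x\cdot y)^2}{(x\cdot x)(y\cdot y)}$. The pseudo-angle between two chords is the pseudo-angle between their direction vectors. *)

theory Defs
  imports Complex_Main
begin

definition mink :: "real \<times> real \<Rightarrow> real \<times> real \<Rightarrow> real" where
  "mink x y = - fst x * fst y + snd x * snd y"

definition timelike :: "real \<times> real \<Rightarrow> bool" where
  "timelike x \<longleftrightarrow> mink x x < 0"

definition spacelike :: "real \<times> real \<Rightarrow> bool" where
  "spacelike x \<longleftrightarrow> mink x x > 0"

text \<open>The pseudo-angle: the unique theta >= 0 with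
  cosh(theta)^2 = (x.y)^2 / ((x.x)(y.y)); meaningful when x, y are both
  timelike or both spacelike.\<close>
definition pseudo_angle :: "real \<times> real \<Rightarrow> real \<times> real \<Rightarrow> real" where
  "pseudo_angle x y = (THE \<theta>. \<theta> \<ge> 0 \<and>
     (cosh \<theta>)\<^sup>2 = (mink x y)\<^sup>2 / (mink x x * mink y y))"

definition hpt :: "real \<Rightarrow> real \<times> real" where
  "hpt \<theta> = (sinh \<theta>, cosh \<theta>)"

definition chord :: "real \<times> real \<Rightarrow> real \<times> real \<Rightarrow> real \<times> real" where
  "chord P Q = (fst Q - fst P, snd Q - snd P)"

end

theory Submission
  imports Defs
begin

lemma pa_eq:
  assumes "(mink x y)\<^sup>2 / (mink x x * mink y y) = (cosh t)\<^sup>2"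
  shows "pseudo_angle x y = \<bar>t\<bar>"
  unfolding pseudo_angle_def
proof (rule the_equality)
  show "0 \<le> \<bar>t\<bar> \<and> (cosh \<bar>t\<bar>)\<^sup>2 = (mink x y)\<^sup>2 / (mink x x * mink y y)"
    using assms by simp
next
  fix th assume h: "0 \<le> th \<and> (cosh th)\<^sup>2 = (mink x y)\<^sup>2 / (mink x x * mink y y)"
  then have "(cosh th)\<^sup>2 = (cosh t)\<^sup>2" using assms by simp
  then have "cosh th = cosh t"
    by (simp add: power2_eq_iff_nonneg)
  then show "th = \<bar>t\<bar>" using h by simp
qed

lemma chord_eq:
  "chord (hpt a) (hpt b) = (2*sinh((b-a)/2)*cosh((a+b)/2), 2*sinh((b-a)/2)*sinh((a+b)/2))"
proof -
  define m where "m = (a+b)/2"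
  define d where "d = (b-a)/2"
  have b: "b = m + d" and a: "a = m - d" unfolding m_def d_def by (auto simp: field_simps)
  show ?thesis unfolding chord_def hpt_def
    by (simp add: b a sinh_add sinh_diff cosh_add cosh_diff m_def[symmetric] d_def[symmetric]
        algebra_simps)
qed

lemma mink_sc:
  "mink (s*cosh m, s*sinh m) (r*cosh n, r*sinh n) = - s*r*cosh(m-n)"
  unfolding mink_def by (simp add: cosh_diff algebra_simps)

lemma mink_sc_self:
  "mink (s*cosh m, s*sinh m) (s*cosh m, s*sinh m) = - (s\<^sup>2)"
  using mink_sc[of s m s m] by (simp add: power2_eq_square)

lemma mink_hpt: "mink (hpt a) (hpt b) = cosh (a - b)"
  unfolding mink_def hpt_def by (simp add: cosh_diff)

theorem mainTheorem2:
  fixes \<theta>1 \<theta>2 :: real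
  defines "P1 \<equiv> hpt \<theta>1" and "P2 \<equiv> hpt \<theta>2"
  shows "spacelike P1 \<and> spacelike P2
    \<and> (cosh (pseudo_angle P1 P2))\<^sup>2 = (cosh (\<theta>1 - \<theta>2))\<^sup>2
    \<and> pseudo_angle P1 P2 = \<bar>\<theta>1 - \<theta>2\<bar>
    \<and> (\<forall>\<theta>0::real. \<theta>0 \<noteq> \<theta>1 \<and> \<theta>0 \<noteq> \<theta>2 \<longrightarrow>
         ((timelike (chord (hpt \<theta>0) P1) \<and> timelike (chord (hpt \<theta>0) P2)) \<or>
          (spacelike (chord (hpt \<theta>0) P1) \<and> spacelike (chord (hpt \<theta>0) P2)))
         \<and> pseudo_angle (chord (hpt \<theta>0) P1) (chord (hpt \<theta>0) P2) = \<bar>\<theta>1 - \<theta>2\<bar> / 2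
         \<and> pseudo_angle P1 P2 = 2 * pseudo_angle (chord (hpt \<theta>0) P1) (chord (hpt \<theta>0) P2))"
proof -
  have s1: "mink P1 P1 = 1" "mink P2 P2 = 1" unfolding P1_def P2_def mink_hpt by simp_all
  have pa: "pseudo_angle P1 P2 = \<bar>\<theta>1 - \<theta>2\<bar>"
    by (rule pa_eq) (simp add: s1 P1_def P2_def mink_hpt)
  have rest: "((timelike (chord (hpt \<theta>0) P1) \<and> timelike (chord (hpt \<theta>0) P2)) \<or>
          (spacelike (chord (hpt \<theta>0) P1) \<and> spacelike (chord (hpt \<theta>0) P2)))
         \<and> pseudo_angle (chord (hpt \<theta>0) P1) (chord (hpt \<theta>0) P2) = \<bar>\<theta>1 - \<theta>2\<bar> / 2"
    if h: "\<theta>0 \<noteq> \<theta>1 \<and> \<theta>0 \<noteq> \<theta>2" for \<theta>0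
  proof -
    define s where "s = 2*sinh((\<theta>1-\<theta>0)/2)"
    define r where "r = 2*sinh((\<theta>2-\<theta>0)/2)"
    have sn: "s \<noteq> 0" "r \<noteq> 0" using h unfolding s_def r_def by auto
    have c1: "chord (hpt \<theta>0) P1 = (s*cosh((\<theta>0+\<theta>1)/2), s*sinh((\<theta>0+\<theta>1)/2))"
      unfolding P1_def chord_eq s_def by simp
    have c2: "chord (hpt \<theta>0) P2 = (r*cosh((\<theta>0+\<theta>2)/2), r*sinh((\<theta>0+\<theta>2)/2))"
      unfolding P2_def chord_eq r_def by simp
    have t: "timelike (chord (hpt \<theta>0) P1) \<and> timelike (chord (hpt \<theta>0) P2)"
      unfolding timelike_def c1 c2 mink_sc_self using sn by simp
    have eq: "(\<theta>0 + \<theta>1) / 2 - (\<theta>0 + \<theta>2) / 2 = (\<theta>1 - \<theta>2)/2" by (simp add: field_simps)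
    have "pseudo_angle (chord (hpt \<theta>0) P1) (chord (hpt \<theta>0) P2) = \<bar>(\<theta>1 - \<theta>2)/2\<bar>"
      apply (rule pa_eq)
      unfolding c1 c2 mink_sc_self mink_sc eq using sn
      by (simp add: field_simps power2_eq_square)
    then show ?thesis using t by simp
  qed
  have "\<forall>\<theta>0::real. \<theta>0 \<noteq> \<theta>1 \<and> \<theta>0 \<noteq> \<theta>2 \<longrightarrow>
         ((timelike (chord (hpt \<theta>0) P1) \<and> timelike (chord (hpt \<theta>0) P2)) \<or>
          (spacelike (chord (hpt \<theta>0) P1) \<and> spacelike (chord (hpt \<theta>0) P2)))
         \<and> pseudo_angle (chord (hpt \<theta>0) P1) (chord (hpt \<theta>0) P2) = \<bar>\<theta>1 - \<theta>2\<bar> / 2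
         \<and> pseudo_angle P1 P2 = 2 * pseudo_angle (chord (hpt \<theta>0) P1) (chord (hpt \<theta>0) P2)"
  proof (intro allI impI)
    fix t0 assume h: "t0 \<noteq> \<theta>1 \<and> t0 \<noteq> \<theta>2"
    from rest[OF h] pa show "((timelike (chord (hpt t0) P1) \<and> timelike (chord (hpt t0) P2)) \<or>
          (spacelike (chord (hpt t0) P1) \<and> spacelike (chord (hpt t0) P2)))
         \<and> pseudo_angle (chord (hpt t0) P1) (chord (hpt t0) P2) = \<bar>\<theta>1 - \<theta>2\<bar> / 2
         \<and> pseudo_angle P1 P2 = 2 * pseudo_angle (chord (hpt t0) P1) (chord (hpt t0) P2)"
      by (intro conjI; (elim conjE)?; simp)
  qed
  then show ?thesis using pa
    by (simp add: spacelike_def s1)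
qed

end
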